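(* Let $R$ be a commutative ring, $n\ge m\ge1$, and $f(t)=a_0+a_1t+\cdots+a_nt^n$, $g(t)=b_0+b_1t+\cdots+b_mt^m$ in $R[t]$. Suppose there is a nonzero divisor $d\in R$, $d\neq 0$, with $\langle a_n,b_m\rangle=\langle d\rangle$. Then for each $j=0,\ldots,m-1$ there is an exact sequence of $R$-modules $$R/\langle d\rangle\to\mathrm{coker}(\psi_{j+1})\to\mathrm{coker}(\psi_j)\to R/\langle d\rangle\to0.$$ In particular, if $d=1$ then $\mathrm{coker}(\psi_j)\cong\mathrm{coker}(\psi_k)$ for all $j,k\in\{0,\ldots,m\}$.
   Context: For $k=0,\ldots,m-1$ put $f_k(t)=a_nt^{n-m+k}+a_{n-1}t^{n-m+k-1}+\cdots+a_{m-k}$, $g_k(t)=b_mt^k+b_{m-1}t^{k-1}+\cdots+b_{m-k}$, and $p_k(t)=g_k(t)f(t)-f_k(t)g(t)$ (of degree $\le n-1$). $R[t]_{\le e}$ denotes polynomials of degree $\le e$. For $j\in\{0,\ldots,m\}$, $\psi_j:R^j\oplus R[t]_{\le m-j-1}\oplus R[t]_{\le n-j-1}\to R[t]_{\le m+n-j-1}$ is the $R$-linear map sending the $i$-th standard basis vector $e_i$ of $R^j$ ($1\le i\le j$) to $p_{m-j+i-1}(t)$ and $(0,a(t),b(t))$ to $a(t)f(t)+b(t)g(t)$. ($\psi_0$ is the Sylvester map, $\psi_m$ the hybrid Bézout map.) *)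

theory Defs
  imports "HOL-Computational_Algebra.Polynomial"
begin

text \<open>R[t]_{<= e-1}: polynomials all of whose coefficients of index >= e vanish
  (so polys_lt 0 = {0}).\<close>
definition polys_lt :: "nat \<Rightarrow> 'a::zero poly set" where
  "polys_lt e = {p. \<forall>i\<ge>e. coeff p i = 0}"

definition f_k :: "nat \<Rightarrow> nat \<Rightarrow> 'a::comm_ring_1 poly \<Rightarrow> nat \<Rightarrow> 'a poly" where
  "f_k n m f k = (\<Sum>i\<le>n - m + k. monom (coeff f (m - k + i)) i)"

definition g_k :: "nat \<Rightarrow> 'a::comm_ring_1 poly \<Rightarrow> nat \<Rightarrow> 'a poly" where
  "g_k m g k = (\<Sum>i\<le>k. monom (coeff g (m - k + i)) i)"

definition p_k :: "nat \<Rightarrow> nat \<Rightarrow> 'a::comm_ring_1 poly \<Rightarrow> 'a poly \<Rightarrow> nat \<Rightarrow> 'a poly" where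
  "p_k n m f g k = g_k m g k * f - f_k n m f k * g"

text \<open>Domain of psi_j: R^j (functions supported on {1..j}) x R[t]_{<= m-j-1} x R[t]_{<= n-j-1}.\<close>
definition psi_dom :: "nat \<Rightarrow> nat \<Rightarrow> nat \<Rightarrow> ((nat \<Rightarrow> 'a::comm_ring_1) \<times> 'a poly \<times> 'a poly) set" where
  "psi_dom n m j = {(c, a, b). (\<forall>i. c i \<noteq> 0 \<longrightarrow> i \<in> {1..j}) \<and> a \<in> polys_lt (m - j) \<and> b \<in> polys_lt (n - j)}"

definition psi :: "nat \<Rightarrow> nat \<Rightarrow> 'a::comm_ring_1 poly \<Rightarrow> 'a poly \<Rightarrow> nat
    \<Rightarrow> (nat \<Rightarrow> 'a) \<times> 'a poly \<times> 'a poly \<Rightarrow> 'a poly" where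
  "psi n m f g j = (\<lambda>(c, a, b). (\<Sum>i\<in>{1..j}. smult (c i) (p_k n m f g (m - j + i - 1))) + a * f + b * g)"

text \<open>coker(psi_j) is presented as the quotient coker_M / coker_N.\<close>
definition coker_M :: "nat \<Rightarrow> nat \<Rightarrow> nat \<Rightarrow> 'a::comm_ring_1 poly set" where
  "coker_M n m j = polys_lt (m + n - j)"

definition coker_N :: "nat \<Rightarrow> nat \<Rightarrow> 'a::comm_ring_1 poly \<Rightarrow> 'a poly \<Rightarrow> nat \<Rightarrow> 'a poly set" where
  "coker_N n m f g j = psi n m f g j ` psi_dom n m j"

text \<open>The ideal <d>, so that R/<d> is presented as UNIV / principal_ideal d.\<close>
definition principal_ideal :: "'a::comm_ring_1 \<Rightarrow> 'a set" where
  "principal_ideal d = {z * d | z. True}"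

text \<open>An R-module homomorphism M1/N1 -> M2/N2 between quotient modules, given by an
  R-linear lift h (ambient modules with scalar actions s1, s2).\<close>
definition qhom :: "('r \<Rightarrow> 'b::ab_group_add \<Rightarrow> 'b) \<Rightarrow> 'b set \<Rightarrow> 'b set
    \<Rightarrow> ('r \<Rightarrow> 'c::ab_group_add \<Rightarrow> 'c) \<Rightarrow> 'c set \<Rightarrow> 'c set \<Rightarrow> ('b \<Rightarrow> 'c) \<Rightarrow> bool" where
  "qhom s1 M1 N1 s2 M2 N2 h \<longleftrightarrow>
     (\<forall>x y. h (x + y) = h x + h y) \<and> (\<forall>r x. h (s1 r x) = s2 r (h x)) \<and>
     h ` M1 \<subseteq> M2 \<and> h ` N1 \<subseteq> N2"

text \<open>Exactness at M2/N2 of M1/N1 --h--> M2/N2 --k--> M3/N3: ker = im.\<close>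
definition qexact :: "'b set \<Rightarrow> 'c::ab_group_add set \<Rightarrow> 'c set \<Rightarrow> 'd set \<Rightarrow>
    ('b \<Rightarrow> 'c) \<Rightarrow> ('c \<Rightarrow> 'd) \<Rightarrow> bool" where
  "qexact M1 M2 N2 N3 h k \<longleftrightarrow> (\<forall>x\<in>M2. k x \<in> N3 \<longleftrightarrow> (\<exists>y\<in>M1. x - h y \<in> N2))"

definition qsurj :: "'c set \<Rightarrow> 'd::ab_group_add set \<Rightarrow> 'd set \<Rightarrow> ('c \<Rightarrow> 'd) \<Rightarrow> bool" where
  "qsurj M2 M3 N3 k \<longleftrightarrow> (\<forall>z\<in>M3. \<exists>x\<in>M2. z - k x \<in> N3)"

definition qiso :: "('r \<Rightarrow> 'b::ab_group_add \<Rightarrow> 'b) \<Rightarrow> 'b set \<Rightarrow> 'b set \<Rightarrow> 'b set \<Rightarrow> 'b set \<Rightarrow> bool" where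
  "qiso s M1 N1 M2 N2 \<longleftrightarrow> (\<exists>h h'. qhom s M1 N1 s M2 N2 h \<and> qhom s M2 N2 s M1 N1 h' \<and>
     (\<forall>x\<in>M1. h' (h x) - x \<in> N1) \<and> (\<forall>y\<in>M2. h (h' y) - y \<in> N2))"

end

theory Submission
  imports Defs
begin

lemma coeff_mult_top: assumes "\<forall>i>e1. coeff a i = 0" "\<forall>i>e2. coeff b i = 0"
  shows "coeff (a*b) (e1+e2) = coeff a e1 * coeff (b::'a::comm_ring_1 poly) e2"
proof -
  have "coeff (a*b) (e1+e2) = (\<Sum>i\<le>e1+e2. coeff a i * coeff b (e1+e2-i))" by (rule coeff_mult)
  also have "\<dots> = (\<Sum>i\<in>{e1}. coeff a i * coeff b (e1+e2-i))"
  proof (rule sum.mono_neutral_right)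
    show "\<forall>i\<in>{..e1 + e2} - {e1}. coeff a i * coeff b (e1 + e2 - i) = 0"
    proof
      fix i assume i: "i \<in> {..e1 + e2} - {e1}"
      show "coeff a i * coeff b (e1 + e2 - i) = 0"
      proof (cases "i < e1")
        case True then have "e1+e2-i > e2" by simp
        then show ?thesis using assms by simp
      next
        case False then have "i > e1" using i by auto
        then show ?thesis using assms by simp
      qed
    qed
  qed auto
  finally show ?thesis by simp
qed

lemma polys_lt_Suc: "p \<in> polys_lt (Suc e) \<longleftrightarrow> degree p \<le> e"
  unfolding polys_lt_def
  by (auto intro: degree_le coeff_eq_0)

lemma polys_lt_0: "p \<in> polys_lt 0 \<longleftrightarrow> p = 0"
  unfolding polys_lt_def by (auto simp: poly_eq_iff)

lemma polys_lt_mono: "e \<le> e' \<Longrightarrow> p \<in> polys_lt e \<Longrightarrow> p \<in> polys_lt e'"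
  unfolding polys_lt_def by auto

lemma polys_lt_add: "p \<in> polys_lt e \<Longrightarrow> q \<in> polys_lt e \<Longrightarrow> p + q \<in> polys_lt e"
  unfolding polys_lt_def by auto

lemma polys_lt_diff: "p \<in> polys_lt e \<Longrightarrow> q \<in> polys_lt e \<Longrightarrow> p - q \<in> polys_lt (e::nat)"
  unfolding polys_lt_def by auto

lemma polys_lt_uminus: "p \<in> polys_lt e \<Longrightarrow> - p \<in> polys_lt (e::nat)"
  unfolding polys_lt_def by auto

lemma polys_lt_smult: "p \<in> polys_lt e \<Longrightarrow> smult r p \<in> polys_lt (e::nat)"
  unfolding polys_lt_def by auto

lemma polys_lt_zero: "0 \<in> polys_lt e"
  unfolding polys_lt_def by auto

lemma polys_lt_monom: "i < e \<Longrightarrow> monom c i \<in> polys_lt e"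
  unfolding polys_lt_def by (auto simp: coeff_monom)

lemma polys_lt_sum: "finite S \<Longrightarrow> (\<And>x. x \<in> S \<Longrightarrow> P x \<in> polys_lt e) \<Longrightarrow> sum P S \<in> polys_lt e"
  unfolding polys_lt_def by (auto simp: coeff_sum)

lemma polys_lt_top: "p \<in> polys_lt (Suc e) \<Longrightarrow> coeff p e = 0 \<Longrightarrow> p \<in> polys_lt e"
proof -
  assume a: "p \<in> polys_lt (Suc e)" "coeff p e = 0"
  show ?thesis unfolding polys_lt_def
  proof (intro CollectI allI impI)
    fix i assume "e \<le> i"
    then have "i = e \<or> Suc e \<le> i" by auto
    then show "coeff p i = 0" using a unfolding polys_lt_def by auto
  qed
qed

lemma polys_lt_coeff: "p \<in> polys_lt e \<Longrightarrow> e \<le> i \<Longrightarrow> coeff p i = 0"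
  unfolding polys_lt_def by auto

lemma polys_lt_mult: "a \<in> polys_lt ea \<Longrightarrow> b \<in> polys_lt eb \<Longrightarrow> a * b \<in> polys_lt (ea + eb - 1)"
proof -
  assume a: "a \<in> polys_lt ea" and b: "b \<in> polys_lt eb"
  show ?thesis
  proof (cases "ea = 0 \<or> eb = 0")
    case True then have "a = 0 \<or> b = 0" using a b polys_lt_0 by auto
    then show ?thesis by (auto simp: polys_lt_zero)
  next
    case False
    then obtain ea' eb' where e: "ea = Suc ea'" "eb = Suc eb'" by (metis not0_implies_Suc)
    have "degree a \<le> ea'" "degree b \<le> eb'" using a b e polys_lt_Suc by auto
    then have "degree (a*b) \<le> ea' + eb'" by (meson add_mono degree_mult_le order_trans)
    then show ?thesis using e polys_lt_Suc[of "a*b" "ea'+eb'"] by simp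
  qed
qed

lemma fk_coeff: "coeff (f_k n m f k) i = (if i \<le> n - m + k then coeff f (m - k + i) else 0)"
  unfolding f_k_def by (simp add: coeff_sum coeff_monom)

lemma gk_coeff: "coeff (g_k m g k) i = (if i \<le> k then coeff g (m - k + i) else 0)"
  unfolding g_k_def by (simp add: coeff_sum coeff_monom)

lemma fk_lt: "f_k n m f k \<in> polys_lt (Suc (n - m + k))"
  unfolding polys_lt_def by (auto simp: fk_coeff)

lemma gk_lt: "g_k m g k \<in> polys_lt (Suc k)"
  unfolding polys_lt_def by (auto simp: gk_coeff)

context
  fixes f g :: "'a::comm_ring_1 poly" and n m :: nat
  assumes mn: "m \<le> n" and df: "degree f \<le> n" and dg: "degree g \<le> m"
begin

lemma F_lt: assumes "k \<le> m" shows "f - monom 1 (m - k) * f_k n m f k \<in> polys_lt (m - k)"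
  unfolding polys_lt_def
proof (intro CollectI allI impI)
  fix i assume i: "m - k \<le> i"
  show "coeff (f - monom 1 (m - k) * f_k n m f k) i = 0"
  proof (cases "i \<le> n")
    case True then show ?thesis using i assms mn by (simp add: coeff_monom_mult fk_coeff)
  next
    case False then show ?thesis using i assms mn df by (simp add: coeff_monom_mult fk_coeff coeff_eq_0)
  qed
qed

lemma G_lt: assumes "k \<le> m" shows "g - monom 1 (m - k) * g_k m g k \<in> polys_lt (m - k)"
  unfolding polys_lt_def
proof (intro CollectI allI impI)
  fix i assume i: "m - k \<le> i"
  show "coeff (g - monom 1 (m - k) * g_k m g k) i = 0"
  proof (cases "i \<le> m")
    case True then show ?thesis using i assms by (simp add: coeff_monom_mult gk_coeff)
  next
    case False then show ?thesis using i assms dg by (simp add: coeff_monom_mult gk_coeff coeff_eq_0)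
  qed
qed

lemma pk_lt: assumes "k \<le> m" shows "p_k n m f g k \<in> polys_lt n"
proof -
  define F where "F = f - monom 1 (m - k) * f_k n m f k"
  define G where "G = g - monom 1 (m - k) * g_k m g k"
  have eq: "p_k n m f g k = g_k m g k * F - f_k n m f k * G"
    unfolding p_k_def F_def G_def by (simp add: algebra_simps)
  have "g_k m g k * F \<in> polys_lt (Suc k + (m - k) - 1)"
    using polys_lt_mult[OF gk_lt F_lt[OF assms]] F_def by simp
  then have 1: "g_k m g k * F \<in> polys_lt n" using assms mn by (auto intro: polys_lt_mono)
  have "f_k n m f k * G \<in> polys_lt (Suc (n - m + k) + (m - k) - 1)"
    using polys_lt_mult[OF fk_lt G_lt[OF assms]] G_def by simp
  then have 2: "f_k n m f k * G \<in> polys_lt n" using assms mn by (auto elim: polys_lt_mono[rotated])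
  show ?thesis unfolding eq using 1 2 by (rule polys_lt_diff)
qed

end


lemma smult_sum_right: "smult r (sum h S) = (\<Sum>i\<in>S. smult r (h i))"
  by (induction S rule: infinite_finite_induct) (auto simp: smult_add_right)

lemma psi_eq: "psi n m f g j (c,a,b) = (\<Sum>i\<in>{1..j}. smult (c i) (p_k n m f g (m-j+i-1))) + a*f + b*g"
  by (simp add: psi_def)

lemma dom_iff: "(c,a,b) \<in> psi_dom n m j \<longleftrightarrow> (\<forall>i. c i \<noteq> 0 \<longrightarrow> i \<in> {1..j}) \<and> a \<in> polys_lt (m-j) \<and> b \<in> polys_lt (n-j)"
  by (simp add: psi_dom_def)

lemma N_I: "(c,a,b) \<in> psi_dom n m j \<Longrightarrow> x = psi n m f g j (c,a,b) \<Longrightarrow> x \<in> coker_N n m f g j"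
  unfolding coker_N_def by blast

lemma N_E: assumes "x \<in> coker_N n m f g j"
  obtains c a b where "(c,a,b) \<in> psi_dom n m j" "x = psi n m f g j (c,a,b)"
  using assms unfolding coker_N_def by auto

lemma N_diff: assumes "x \<in> coker_N n m f g j" "y \<in> coker_N n m f g j"
  shows "x - y \<in> coker_N n m f g j"
proof -
  obtain c a b where 1: "(c,a,b) \<in> psi_dom n m j" "x = psi n m f g j (c,a,b)" using assms(1) by (rule N_E)
  obtain c' a' b' where 2: "(c',a',b') \<in> psi_dom n m j" "y = psi n m f g j (c',a',b')" using assms(2) by (rule N_E)
  show ?thesis
  proof (rule N_I)
    show "(\<lambda>i. c i - c' i, a - a', b - b') \<in> psi_dom n m j"
      using 1 2 by (auto simp: dom_iff intro: polys_lt_diff) (metis diff_self)+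
    show "x - y = psi n m f g j (\<lambda>i. c i - c' i, a - a', b - b')"
      unfolding 1 2 psi_eq by (simp add: smult_diff_left sum_subtractf algebra_simps)
  qed
qed

lemma N_smult: assumes "x \<in> coker_N n m f g j"
  shows "smult r x \<in> coker_N n m f g j"
proof -
  obtain c a b where 1: "(c,a,b) \<in> psi_dom n m j" "x = psi n m f g j (c,a,b)" using assms(1) by (rule N_E)
  show ?thesis
  proof (rule N_I)
    show "(\<lambda>i. r * c i, smult r a, smult r b) \<in> psi_dom n m j"
      using 1 by (auto simp: dom_iff intro: polys_lt_smult) (metis mult_zero_right)+
    show "smult r x = psi n m f g j (\<lambda>i. r * c i, smult r a, smult r b)"
      unfolding 1 psi_eq by (simp add: smult_sum_right smult_add_right)
  qed
qed

lemma N_ab: "a \<in> polys_lt (m-j) \<Longrightarrow> b \<in> polys_lt (n-j) \<Longrightarrow> a * f + b * g \<in> coker_N n m f g j"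
  by (rule N_I[of "\<lambda>_. 0" a b]) (auto simp: dom_iff psi_eq)

lemma N_zero: "0 \<in> coker_N n m f g j"
  using N_ab[of 0 m j 0 n f g] by (simp add: polys_lt_zero)

lemma N_add: "x \<in> coker_N n m f g j \<Longrightarrow> y \<in> coker_N n m f g j \<Longrightarrow> x + y \<in> coker_N n m f g j"
proof -
  assume x: "x \<in> coker_N n m f g j" and y: "y \<in> coker_N n m f g j"
  have "0 - y \<in> coker_N n m f g j" by (rule N_diff[OF N_zero y])
  from N_diff[OF x this] show ?thesis by simp
qed



context
  fixes f g :: "'a::comm_ring_1 poly" and n m :: nat
  assumes mn: "m \<le> n" and df: "degree f \<le> n" and dg: "degree g \<le> m"
begin

lemma T: assumes j: "j < m" and dom: "(c,a,b) \<in> psi_dom n m j"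
  shows "psi n m f g j (c,a,b) \<in> polys_lt (m+n-j)"
    "coeff (psi n m f g j (c,a,b)) (m+n-Suc j) = coeff a (m - Suc j) * coeff f n + coeff b (n - Suc j) * coeff g m"
proof -
  have c: "\<forall>i. c i \<noteq> 0 \<longrightarrow> i \<in> {1..j}" and a: "a \<in> polys_lt (m-j)" and b: "b \<in> polys_lt (n-j)"
    using dom by (auto simp: dom_iff)
  define S where "S = (\<Sum>i\<in>{1..j}. smult (c i) (p_k n m f g (m-j+i-1)))"
  have S: "S \<in> polys_lt n" unfolding S_def
    by (rule polys_lt_sum) (use j in \<open>auto intro!: polys_lt_smult pk_lt[OF mn df dg]\<close>)
  have f: "f \<in> polys_lt (Suc n)" using df polys_lt_Suc by blast
  have g: "g \<in> polys_lt (Suc m)" using dg polys_lt_Suc by blast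
  have "a * f \<in> polys_lt (m - j + Suc n - 1)" by (rule polys_lt_mult[OF a f])
  then have af: "a * f \<in> polys_lt (m + n - j)" using j by (simp add: Suc_diff_le)
  have bg0: "b * g \<in> polys_lt (n - j + Suc m - 1)" by (rule polys_lt_mult[OF b g])
  have e: "n - j + Suc m - 1 = m + n - j" using j mn by arith
  have bg: "b * g \<in> polys_lt (m + n - j)" using bg0 unfolding e .
  have nl: "n \<le> m+n-j" using j by arith
  have S': "S \<in> polys_lt (m+n-j)" by (rule polys_lt_mono[OF nl S])
  have eq: "psi n m f g j (c,a,b) = S + a * f + b * g" unfolding S_def by (simp add: psi_eq)
  show "psi n m f g j (c,a,b) \<in> polys_lt (m+n-j)" unfolding eq
    by (intro polys_lt_add S' af bg)
  have cS: "coeff S (m+n-Suc j) = 0" using S j by (intro polys_lt_coeff) auto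
  have "coeff (a*f) (m - Suc j + n) = coeff a (m - Suc j) * coeff f n"
    by (rule coeff_mult_top) (auto intro: polys_lt_coeff[OF a] coeff_eq_0 le_less_trans[OF df])
  moreover have "coeff (b*g) (n - Suc j + m) = coeff b (n - Suc j) * coeff g m"
    by (rule coeff_mult_top) (auto intro: polys_lt_coeff[OF b] coeff_eq_0 le_less_trans[OF dg])
  moreover have "m - Suc j + n = m+n-Suc j" "n - Suc j + m = m+n-Suc j" using j mn by auto
  ultimately show "coeff (psi n m f g j (c,a,b)) (m+n-Suc j) = coeff a (m - Suc j) * coeff f n + coeff b (n - Suc j) * coeff g m"
    unfolding eq using cS by simp
qed


lemma N_mono: assumes j: "j < m" and x: "x \<in> coker_N n m f g (Suc j)"
  shows "x \<in> coker_N n m f g j"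
proof -
  obtain c a b where dom: "(c,a,b) \<in> psi_dom n m (Suc j)" and xe: "x = psi n m f g (Suc j) (c,a,b)"
    using x by (rule N_E)
  have c: "\<forall>i. c i \<noteq> 0 \<longrightarrow> i \<in> {1..Suc j}" and a: "a \<in> polys_lt (m-Suc j)" and b: "b \<in> polys_lt (n-Suc j)"
    using dom by (auto simp: dom_iff)
  define K where "K = m - Suc j"
  define P where "P = (\<lambda>k. p_k n m f g k)"
  have "(\<Sum>i\<in>{1..Suc j}. smult (c i) (P (m - Suc j + i - 1)))
      = smult (c 1) (P K) + (\<Sum>i\<in>{Suc 1..Suc j}. smult (c i) (P (m - Suc j + i - 1)))"
    by (subst sum.atLeast_Suc_atMost) (auto simp: K_def)
  also have "(\<Sum>i\<in>{Suc 1..Suc j}. smult (c i) (P (m - Suc j + i - 1)))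
      = (\<Sum>i\<in>{1..j}. smult (c (Suc i)) (P (m - Suc j + Suc i - 1)))"
    by (rule sum.shift_bounds_cl_Suc_ivl)
  also have "\<dots> = (\<Sum>i\<in>{1..j}. smult (if i = 0 then 0 else c (Suc i)) (P (m - j + i - 1)))"
    by (rule sum.cong) (use j in auto)
  finally have sum_eq: "(\<Sum>i\<in>{1..Suc j}. smult (c i) (P (m - Suc j + i - 1)))
     = smult (c 1) (P K) + (\<Sum>i\<in>{1..j}. smult (if i = 0 then 0 else c (Suc i)) (P (m - j + i - 1)))" .
  show ?thesis
  proof (rule N_I)
    show "(\<lambda>i. if i = 0 then 0 else c (Suc i), a + smult (c 1) (g_k m g K), b - smult (c 1) (f_k n m f K)) \<in> psi_dom n m j"
      unfolding dom_iff
    proof (intro conjI allI impI)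
      fix i assume "(if i = 0 then 0 else c (Suc i)) \<noteq> 0"
      then show "i \<in> {1..j}" using c by (auto split: if_splits)
    next
      have "g_k m g K \<in> polys_lt (m - j)" using gk_lt[of m g K] j by (simp add: K_def Suc_diff_Suc)
      moreover have "a \<in> polys_lt (m - j)" using a by (rule polys_lt_mono[rotated]) auto
      ultimately show "a + smult (c 1) (g_k m g K) \<in> polys_lt (m - j)" by (intro polys_lt_add polys_lt_smult)
    next
      have "f_k n m f K \<in> polys_lt (n - j)" using fk_lt[of n m f K] j mn by (simp add: K_def Suc_diff_Suc)
      moreover have "b \<in> polys_lt (n - j)" using b by (rule polys_lt_mono[rotated]) auto
      ultimately show "b - smult (c 1) (f_k n m f K) \<in> polys_lt (n - j)" by (intro polys_lt_diff polys_lt_smult)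
    qed
    show "x = psi n m f g j (\<lambda>i. if i = 0 then 0 else c (Suc i), a + smult (c 1) (g_k m g K), b - smult (c 1) (f_k n m f K))"
      unfolding xe psi_eq using sum_eq unfolding P_def
      by (simp add: p_k_def algebra_simps smult_diff_right)
  qed
qed



lemma N_shift: assumes j: "j < m" and dom: "(c,a,b) \<in> psi_dom n m j"
  and a': "a \<in> polys_lt (m - Suc j)" and b': "b \<in> polys_lt (n - Suc j)"
  shows "psi n m f g j (c,a,b) \<in> coker_N n m f g (Suc j)"
proof -
  have c: "\<forall>i. c i \<noteq> 0 \<longrightarrow> i \<in> {1..j}" using dom by (auto simp: dom_iff)
  then have c0: "c 0 = 0" by auto
  define P where "P = (\<lambda>k. p_k n m f g k)"
  define c' where "c' = (\<lambda>i. if i = 0 then 0 else c (i - 1))"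
  have "(\<Sum>i\<in>{1..Suc j}. smult (c' i) (P (m - Suc j + i - 1)))
      = smult (c' 1) (P (m - Suc j)) + (\<Sum>i\<in>{Suc 1..Suc j}. smult (c' i) (P (m - Suc j + i - 1)))"
    by (subst sum.atLeast_Suc_atMost) auto
  also have "(\<Sum>i\<in>{Suc 1..Suc j}. smult (c' i) (P (m - Suc j + i - 1)))
      = (\<Sum>i\<in>{1..j}. smult (c' (Suc i)) (P (m - Suc j + Suc i - 1)))"
    by (rule sum.shift_bounds_cl_Suc_ivl)
  also have "\<dots> = (\<Sum>i\<in>{1..j}. smult (c i) (P (m - j + i - 1)))"
    by (rule sum.cong) (use j in \<open>auto simp: c'_def\<close>)
  finally have sum_eq: "(\<Sum>i\<in>{1..Suc j}. smult (c' i) (P (m - Suc j + i - 1)))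
     = (\<Sum>i\<in>{1..j}. smult (c i) (P (m - j + i - 1)))" using c0 by (simp add: c'_def)
  show ?thesis
  proof (rule N_I)
    show "(c', a, b) \<in> psi_dom n m (Suc j)" unfolding dom_iff
      using a' b' c by (auto simp: c'_def split: if_splits)
    show "psi n m f g j (c, a, b) = psi n m f g (Suc j) (c', a, b)"
      unfolding psi_eq using sum_eq unfolding P_def by simp
  qed
qed

lemma N_pk: assumes j: "j < m"
  shows "monom (coeff g m) (m - Suc j) * f - monom (coeff f n) (n - Suc j) * g \<in> coker_N n m f g (Suc j)"
proof -
  define K where "K = m - Suc j"
  define P where "P = (\<lambda>k. p_k n m f g k)"
  define c where "c = (\<lambda>i::nat. if i = 1 then (1::'a) else 0)"
  have "(\<Sum>i\<in>{1..Suc j}. smult (c i) (P (m - Suc j + i - 1)))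
      = smult (c 1) (P K) + (\<Sum>i\<in>{Suc 1..Suc j}. smult (c i) (P (m - Suc j + i - 1)))"
    by (subst sum.atLeast_Suc_atMost) (auto simp: K_def)
  also have "(\<Sum>i\<in>{Suc 1..Suc j}. smult (c i) (P (m - Suc j + i - 1))) = 0"
    by (rule sum.neutral) (auto simp: c_def)
  finally have sum_eq: "(\<Sum>i\<in>{1..Suc j}. smult (c i) (P (m - Suc j + i - 1))) = P K"
    by (simp add: c_def)
  have nK: "n - m + K = n - Suc j" using j mn by (simp add: K_def)
  show ?thesis
  proof (rule N_I)
    show "(c, -(g_k m g K - monom (coeff g m) K), f_k n m f K - monom (coeff f n) (n - Suc j)) \<in> psi_dom n m (Suc j)"
      unfolding dom_iff
    proof (intro conjI allI impI)
      fix i assume "c i \<noteq> 0" then show "i \<in> {1..Suc j}" by (auto simp: c_def split: if_splits)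
    next
      show "- (g_k m g K - monom (coeff g m) K) \<in> polys_lt (m - Suc j)"
        unfolding polys_lt_def using j by (auto simp: gk_coeff coeff_monom K_def)
    next
      show "f_k n m f K - monom (coeff f n) (n - Suc j) \<in> polys_lt (n - Suc j)"
        unfolding polys_lt_def using j mn by (auto simp: fk_coeff coeff_monom K_def)
    qed
    show "monom (coeff g m) (m - Suc j) * f - monom (coeff f n) (n - Suc j) * g =
      psi n m f g (Suc j) (c, -(g_k m g K - monom (coeff g m) K), f_k n m f K - monom (coeff f n) (n - Suc j))"
      unfolding psi_eq using sum_eq unfolding P_def
      by (simp add: p_k_def algebra_simps K_def)
  qed
qed


end


definition Qp :: "'a::comm_ring_1 poly \<Rightarrow> 'a poly \<Rightarrow> nat \<Rightarrow> nat \<Rightarrow> 'a \<Rightarrow> 'a \<Rightarrow> nat \<Rightarrow> 'a poly" where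
  "Qp f g n m \<alpha> \<beta> j = monom \<beta> (m - Suc j) * f - monom \<alpha> (n - Suc j) * g"

context
  fixes f g :: "'a::comm_ring_1 poly" and n m :: nat and d \<alpha> \<beta> x0 y0 :: 'a
  assumes mn: "m \<le> n" and df: "degree f \<le> n" and dg: "degree g \<le> m"
    and nzd: "\<forall>x. d * x = 0 \<longrightarrow> x = 0"
    and an: "coeff f n = \<alpha> * d" and bm: "coeff g m = \<beta> * d" and xy: "x0 * \<alpha> + y0 * \<beta> = 1"
begin

lemma Q_psi: assumes j: "j < m"
  shows "(\<lambda>_. 0, monom \<beta> (m - Suc j), - monom \<alpha> (n - Suc j)) \<in> psi_dom n m j"
    "Qp f g n m \<alpha> \<beta> j = psi n m f g j (\<lambda>_. 0, monom \<beta> (m - Suc j), - monom \<alpha> (n - Suc j))"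
  using j mn by (auto simp: dom_iff psi_eq Qp_def intro!: polys_lt_monom polys_lt_uminus)

lemma Q_N: "j < m \<Longrightarrow> Qp f g n m \<alpha> \<beta> j \<in> coker_N n m f g j"
  using Q_psi by (blast intro: N_I)

lemma Q_M: assumes j: "j < m" shows "Qp f g n m \<alpha> \<beta> j \<in> polys_lt (m + n - Suc j)"
proof -
  have "Qp f g n m \<alpha> \<beta> j \<in> polys_lt (Suc (m + n - Suc j))"
    using T(1)[OF mn df dg j Q_psi(1)[OF j]] Q_psi(2)[OF j] j by (simp add: Suc_diff_Suc)
  moreover have "coeff (Qp f g n m \<alpha> \<beta> j) (m + n - Suc j) = 0"
    using T(2)[OF mn df dg j Q_psi(1)[OF j]] Q_psi(2)[OF j] by (simp add: an bm)
  ultimately show ?thesis by (rule polys_lt_top)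
qed

lemma Q_d: assumes j: "j < m" shows "smult d (Qp f g n m \<alpha> \<beta> j) \<in> coker_N n m f g (Suc j)"
proof -
  have e: "\<And>c k. monom (c*d) k = smult d (monom c k)" by (simp add: smult_monom mult.commute)
  have "smult d (Qp f g n m \<alpha> \<beta> j) = monom (coeff g m) (m - Suc j) * f - monom (coeff f n) (n - Suc j) * g"
    unfolding an bm e by (simp add: Qp_def smult_diff_right)
  then show ?thesis using N_pk[OF mn df dg j] by simp
qed

lemma top_ideal: assumes j: "j < m" and x: "x \<in> coker_N n m f g j"
  shows "coeff x (m + n - Suc j) \<in> principal_ideal d"
proof -
  obtain c a b where dom: "(c,a,b) \<in> psi_dom n m j" and xe: "x = psi n m f g j (c,a,b)"
    using x by (rule N_E)
  have "coeff x (m + n - Suc j) = (\<alpha> * coeff a (m - Suc j) + \<beta> * coeff b (n - Suc j)) * d"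
    using T(2)[OF mn df dg j dom] unfolding xe by (simp add: an bm algebra_simps)
  then show ?thesis unfolding principal_ideal_def by auto
qed

lemma top_M: assumes j: "j < m" and x: "x \<in> coker_N n m f g j"
  shows "x \<in> polys_lt (m + n - j)"
proof -
  obtain c a b where dom: "(c,a,b) \<in> psi_dom n m j" and xe: "x = psi n m f g j (c,a,b)"
    using x by (rule N_E)
  show ?thesis using T(1)[OF mn df dg j dom] xe by simp
qed

lemma exact1: assumes j: "j < m" and xM: "x \<in> polys_lt (m + n - Suc j)" and x: "x \<in> coker_N n m f g j"
  shows "\<exists>w. x - smult w (Qp f g n m \<alpha> \<beta> j) \<in> coker_N n m f g (Suc j)"
proof -
  obtain c a b where dom: "(c,a,b) \<in> psi_dom n m j" and xe: "x = psi n m f g j (c,a,b)"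
    using x by (rule N_E)
  define K where "K = m - Suc j"
  define L where "L = n - Suc j"
  define u where "u = coeff a K"
  define v where "v = coeff b L"
  have "coeff x (m + n - Suc j) = 0" using xM by (rule polys_lt_coeff) simp
  then have "u * coeff f n + v * coeff g m = 0"
    using T(2)[OF mn df dg j dom] xe by (simp add: u_def v_def K_def L_def)
  then have "d * (u * \<alpha> + v * \<beta>) = 0" by (simp add: an bm algebra_simps)
  then have h: "u * \<alpha> + v * \<beta> = 0" using nzd by blast
  define w where "w = u * y0 - v * x0"
  have "w * \<beta> - u = - x0 * (u * \<alpha> + v * \<beta>) + u * ((x0 * \<alpha> + y0 * \<beta>) - 1)"
    by (simp add: w_def algebra_simps)
  then have wb: "w * \<beta> = u" using h xy by simp
  have "w * \<alpha> + v = y0 * (u * \<alpha> + v * \<beta>) + v * (1 - (x0 * \<alpha> + y0 * \<beta>))"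
    by (simp add: w_def algebra_simps)
  then have wa: "w * \<alpha> = - v" using h xy by (simp add: eq_neg_iff_add_eq_0)
  have a: "a \<in> polys_lt (Suc K)" and b: "b \<in> polys_lt (Suc L)"
    and c: "\<forall>i. c i \<noteq> 0 \<longrightarrow> i \<in> {1..j}"
    using dom j mn by (auto simp: dom_iff K_def L_def Suc_diff_Suc)
  have a': "a - monom u K \<in> polys_lt K"
    by (rule polys_lt_top) (auto intro: polys_lt_diff a polys_lt_monom simp: u_def)
  have b': "b - monom v L \<in> polys_lt L"
    by (rule polys_lt_top) (auto intro: polys_lt_diff b polys_lt_monom simp: v_def)
  have dom': "(c, a - monom u K, b - monom v L) \<in> psi_dom n m j"
    unfolding dom_iff using c a' b' j mn
    by (auto elim!: polys_lt_mono[rotated] simp: K_def L_def)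
  have s1: "smult w (Qp f g n m \<alpha> \<beta> j) = smult w (monom \<beta> K) * f - smult w (monom \<alpha> L) * g"
    by (simp add: Qp_def K_def L_def smult_diff_right)
  have s2: "smult w (monom \<beta> K) = monom u K" "smult w (monom \<alpha> L) = - monom v L"
    by (simp_all add: smult_monom wb wa minus_monom)
  have "x - smult w (Qp f g n m \<alpha> \<beta> j) = psi n m f g j (c, a - monom u K, b - monom v L)"
    unfolding xe psi_eq s1 s2
    by (simp add: algebra_simps)
  moreover have "psi n m f g j (c, a - monom u K, b - monom v L) \<in> coker_N n m f g (Suc j)"
    using N_shift[OF mn df dg j dom'] a' b' by (simp add: K_def L_def)
  ultimately show ?thesis by (intro exI[of _ w]) simp
qed


lemma main_j: assumes j: "j < m"
  shows
    "qhom (*) UNIV (principal_ideal d) smult (coker_M n m (j+1)) (coker_N n m f g (j+1)) (\<lambda>w. smult w (Qp f g n m \<alpha> \<beta> j))"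
    "qhom smult (coker_M n m (j+1)) (coker_N n m f g (j+1)) smult (coker_M n m j) (coker_N n m f g j) id"
    "qhom smult (coker_M n m j) (coker_N n m f g j) (*) UNIV (principal_ideal d) (\<lambda>x. coeff x (m + n - Suc j))"
    "qexact UNIV (coker_M n m (j+1)) (coker_N n m f g (j+1)) (coker_N n m f g j) (\<lambda>w. smult w (Qp f g n m \<alpha> \<beta> j)) id"
    "qexact (coker_M n m (j+1)) (coker_M n m j) (coker_N n m f g j) (principal_ideal d) id (\<lambda>x. coeff x (m + n - Suc j))"
    "qsurj (coker_M n m j) UNIV (principal_ideal d) (\<lambda>x. coeff x (m + n - Suc j))"
proof -
  define Q where "Q = Qp f g n m \<alpha> \<beta> j"
  define top where "top = m + n - Suc j"
  have Mj: "coker_M n m j = polys_lt (Suc top)" using j by (simp add: coker_M_def top_def Suc_diff_Suc)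
  have MJ: "coker_M n m (j+1) = polys_lt top" by (simp add: coker_M_def top_def)
  have NJ: "coker_N n m f g (j+1) = coker_N n m f g (Suc j)" by simp
  show "qhom (*) UNIV (principal_ideal d) smult (coker_M n m (j+1)) (coker_N n m f g (j+1)) (\<lambda>w. smult w (Qp f g n m \<alpha> \<beta> j))"
    unfolding qhom_def MJ NJ
  proof (intro conjI allI subsetI)
    fix y assume "y \<in> (\<lambda>w. smult w (Qp f g n m \<alpha> \<beta> j)) ` principal_ideal d"
    then obtain z where "y = smult (z * d) (Qp f g n m \<alpha> \<beta> j)" unfolding principal_ideal_def by auto
    then have "y = smult z (smult d (Qp f g n m \<alpha> \<beta> j))" by simp
    then show "y \<in> coker_N n m f g (Suc j)" using N_smult[OF Q_d[OF j], of z] by (simp only:)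
  qed (auto simp: smult_add_left top_def intro: polys_lt_smult Q_M[OF j])
  show "qhom smult (coker_M n m (j+1)) (coker_N n m f g (j+1)) smult (coker_M n m j) (coker_N n m f g j) id"
    unfolding qhom_def MJ NJ Mj using N_mono[OF mn df dg j]
    by (auto intro: polys_lt_mono[rotated])
  show "qhom smult (coker_M n m j) (coker_N n m f g j) (*) UNIV (principal_ideal d) (\<lambda>x. coeff x (m + n - Suc j))"
    unfolding qhom_def using top_ideal[OF j] by auto
  show "qexact UNIV (coker_M n m (j+1)) (coker_N n m f g (j+1)) (coker_N n m f g j) (\<lambda>w. smult w (Qp f g n m \<alpha> \<beta> j)) id"
    unfolding qexact_def MJ NJ
  proof (intro ballI iffI)
    fix x assume "x \<in> polys_lt top" "id x \<in> coker_N n m f g j"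
    then show "\<exists>y\<in>UNIV. x - smult y (Qp f g n m \<alpha> \<beta> j) \<in> coker_N n m f g (Suc j)"
      using exact1[OF j] by (simp add: top_def)
  next
    fix x assume "\<exists>y\<in>UNIV. x - smult y (Qp f g n m \<alpha> \<beta> j) \<in> coker_N n m f g (Suc j)"
    then obtain w where w: "x - smult w Q \<in> coker_N n m f g (Suc j)" unfolding Q_def by auto
    have "x - smult w Q \<in> coker_N n m f g j" using N_mono[OF mn df dg j w] .
    moreover have "smult w Q \<in> coker_N n m f g j" unfolding Q_def by (intro N_smult Q_N j)
    ultimately have "(x - smult w Q) + smult w Q \<in> coker_N n m f g j" by (rule N_add)
    then show "id x \<in> coker_N n m f g j" by simp
  qed
  show "qexact (coker_M n m (j+1)) (coker_M n m j) (coker_N n m f g j) (principal_ideal d) id (\<lambda>x. coeff x (m + n - Suc j))"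
    unfolding qexact_def MJ Mj top_def[symmetric]
  proof (intro ballI iffI)
    fix x assume x: "x \<in> polys_lt (Suc top)" and "coeff x top \<in> principal_ideal d"
    then obtain z where z: "coeff x top = z * d" unfolding principal_ideal_def by auto
    define q where "q = monom (z * x0) (m - Suc j) * f + monom (z * y0) (n - Suc j) * g"
    have dq: "(\<lambda>_. 0, monom (z * x0) (m - Suc j), monom (z * y0) (n - Suc j)) \<in> psi_dom n m j"
      using j mn by (auto simp: dom_iff intro!: polys_lt_monom)
    have qe: "q = psi n m f g j (\<lambda>_. 0, monom (z * x0) (m - Suc j), monom (z * y0) (n - Suc j))"
      by (simp add: q_def psi_eq)
    have qN: "q \<in> coker_N n m f g j" using dq qe by (rule N_I)
    have qM: "q \<in> polys_lt (Suc top)" using T(1)[OF mn df dg j dq] qe j by (simp add: top_def Suc_diff_Suc)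
    have "coeff q top = z * x0 * coeff f n + z * y0 * coeff g m"
      using T(2)[OF mn df dg j dq] qe by (simp add: top_def)
    also have "\<dots> = z * d * (x0 * \<alpha> + y0 * \<beta>)" by (simp add: an bm algebra_simps)
    finally have cq: "coeff q top = coeff x top" using xy z by simp
    have "x - q \<in> polys_lt top"
      by (rule polys_lt_top) (use x qM cq in \<open>auto intro: polys_lt_diff\<close>)
    moreover have "x - (x - q) \<in> coker_N n m f g j" using qN by simp
    ultimately show "\<exists>y\<in>polys_lt top. x - id y \<in> coker_N n m f g j" by (intro bexI[of _ "x - q"]) auto
  next
    fix x assume "x \<in> polys_lt (Suc top)" and "\<exists>y\<in>polys_lt top. x - id y \<in> coker_N n m f g j"
    then obtain y where y: "y \<in> polys_lt top" and xy': "x - y \<in> coker_N n m f g j" by auto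
    have "coeff (x - y) top \<in> principal_ideal d" using top_ideal[OF j xy'] by (simp add: top_def)
    moreover have "coeff y top = 0" using y by (rule polys_lt_coeff) simp
    ultimately show "coeff x top \<in> principal_ideal d" by simp
  qed
  show "qsurj (coker_M n m j) UNIV (principal_ideal d) (\<lambda>x. coeff x (m + n - Suc j))"
    unfolding qsurj_def Mj top_def[symmetric]
  proof
    fix z :: 'a
    have "monom z top \<in> polys_lt (Suc top)" by (rule polys_lt_monom) simp
    moreover have "z - coeff (monom z top) top \<in> principal_ideal d"
      unfolding principal_ideal_def by (auto intro: exI[of _ 0])
    ultimately show "\<exists>x\<in>polys_lt (Suc top). z - coeff x top \<in> principal_ideal d" by blast
  qed
qed



lemma iso_j: assumes j: "j < m" and d1: "d = 1"
  shows "qiso smult (coker_M n m (j+1)) (coker_N n m f g (j+1)) (coker_M n m j) (coker_N n m f g j)"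
proof -
  define Q where "Q = Qp f g n m \<alpha> \<beta> j"
  define top where "top = m + n - Suc j"
  have Mj: "coker_M n m j = polys_lt (Suc top)" using j by (simp add: coker_M_def top_def Suc_diff_Suc)
  have MJ: "coker_M n m (j+1) = polys_lt top" by (simp add: coker_M_def top_def)
  have NJ: "coker_N n m f g (j+1) = coker_N n m f g (Suc j)" by simp
  define Q0 where "Q0 = monom x0 (m - Suc j) * f + monom y0 (n - Suc j) * g"
  have dq: "(\<lambda>_. 0, monom x0 (m - Suc j), monom y0 (n - Suc j)) \<in> psi_dom n m j"
    using j mn by (auto simp: dom_iff intro!: polys_lt_monom)
  have qe: "Q0 = psi n m f g j (\<lambda>_. 0, monom x0 (m - Suc j), monom y0 (n - Suc j))"
    by (simp add: Q0_def psi_eq)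
  have qN: "Q0 \<in> coker_N n m f g j" using dq qe by (rule N_I)
  have qM: "Q0 \<in> polys_lt (Suc top)" using T(1)[OF mn df dg j dq] qe j by (simp add: top_def Suc_diff_Suc)
  have "coeff Q0 top = x0 * coeff f n + y0 * coeff g m"
    using T(2)[OF mn df dg j dq] qe by (simp add: top_def)
  then have cq: "coeff Q0 top = 1" using xy d1 by (simp add: an bm)
  define h' where "h' = (\<lambda>x. x - smult (coeff x top) Q0)"
  have h'M: "h' x \<in> polys_lt top" if x: "x \<in> polys_lt (Suc top)" for x
    unfolding h'_def
    by (rule polys_lt_top) (use x qM cq in \<open>auto intro: polys_lt_diff polys_lt_smult\<close>)
  have QNJ: "smult w Q \<in> coker_N n m f g (Suc j)" for w
    using N_smult[OF Q_d[OF j], of w] d1 by (simp add: Q_def)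
  show ?thesis unfolding qiso_def
  proof (rule exI[of _ id], rule exI[of _ h'], intro conjI)
    show "qhom smult (coker_M n m (j + 1)) (coker_N n m f g (j + 1)) smult (coker_M n m j) (coker_N n m f g j) id"
      by (rule main_j(2)[OF j])
    show "qhom smult (coker_M n m j) (coker_N n m f g j) smult (coker_M n m (j + 1)) (coker_N n m f g (j + 1)) h'"
      unfolding qhom_def MJ Mj NJ
    proof (intro conjI allI subsetI)
      fix x y show "h' (x + y) = h' x + h' y" by (simp add: h'_def smult_add_left)
    next
      fix r x show "h' (smult r x) = smult r (h' x)" by (simp add: h'_def smult_diff_right)
    next
      fix y assume "y \<in> h' ` polys_lt (Suc top)" then show "y \<in> polys_lt top" using h'M by auto
    next
      fix y assume "y \<in> h' ` coker_N n m f g j"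
      then obtain x where x: "x \<in> coker_N n m f g j" and ye: "y = h' x" by auto
      have yN: "y \<in> coker_N n m f g j" unfolding ye h'_def by (intro N_diff x N_smult qN)
      have "x \<in> polys_lt (Suc top)" using top_M[OF j x] j by (simp add: top_def Suc_diff_Suc)
      then have yM: "y \<in> polys_lt (m + n - Suc j)" using h'M ye by (simp add: top_def)
      obtain w where w: "y - smult w Q \<in> coker_N n m f g (Suc j)" using exact1[OF j yM yN] Q_def by auto
      have "(y - smult w Q) + smult w Q \<in> coker_N n m f g (Suc j)" by (rule N_add[OF w QNJ])
      then show "y \<in> coker_N n m f g (Suc j)" by simp
    qed
    show "\<forall>x\<in>coker_M n m (j + 1). h' (id (x::'a poly)) - x \<in> coker_N n m f g (j + 1)"
    proof
      fix x :: "'a poly" assume "x \<in> coker_M n m (j + 1)"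
      then have "coeff x top = 0" unfolding MJ by (rule polys_lt_coeff) simp
      then show "h' (id x) - x \<in> coker_N n m f g (j + 1)" by (simp add: h'_def N_zero)
    qed
    show "\<forall>y\<in>coker_M n m j. id (h' (y::'a poly)) - y \<in> coker_N n m f g j"
    proof
      fix y :: "'a poly" assume "y \<in> coker_M n m j"
      have "id (h' y) - y = smult (- coeff y top) Q0" by (simp add: h'_def)
      then show "id (h' y) - y \<in> coker_N n m f g j" using N_smult[OF qN, of "- coeff y top"] by simp
    qed
  qed
qed


end


definition subgrp :: "'b::ab_group_add set \<Rightarrow> bool" where
  "subgrp N \<longleftrightarrow> 0 \<in> N \<and> (\<forall>x\<in>N. \<forall>y\<in>N. x - y \<in> N)"

lemma subgrp_add: "subgrp N \<Longrightarrow> x \<in> N \<Longrightarrow> y \<in> N \<Longrightarrow> x + y \<in> N"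
proof -
  assume N: "subgrp N" and x: "x \<in> N" and y: "y \<in> N"
  have "0 - y \<in> N" using N y unfolding subgrp_def by blast
  then have "x - (0 - y) \<in> N" using N x unfolding subgrp_def by blast
  then show ?thesis by simp
qed

lemma additive_diff: "\<forall>x y. h (x + y) = h x + h y \<Longrightarrow> h ((a::'b::ab_group_add) - b) = h a - (h b :: 'c::ab_group_add)"
proof -
  assume h: "\<forall>x y. h (x + y) = h x + h y"
  have "h (a - b + b) = h (a - b) + h b" using h by blast
  then have "h (a - b) + h b = h a" by simp
  then show ?thesis by (simp add: eq_diff_eq)
qed

lemma qiso_refl: "subgrp N \<Longrightarrow> qiso s M N M N"
  unfolding qiso_def qhom_def subgrp_def by (intro exI[of _ id]) auto

lemma qiso_sym: "qiso s M1 N1 M2 N2 \<Longrightarrow> qiso s M2 N2 M1 N1"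
  unfolding qiso_def by blast

lemma qiso_trans: assumes "subgrp N1" "subgrp N3"
  and 12: "qiso s M1 N1 M2 N2" and 23: "qiso s M2 N2 M3 N3"
  shows "qiso s M1 N1 M3 N3"
proof -
  obtain h1 h1' where a: "qhom s M1 N1 s M2 N2 h1" "qhom s M2 N2 s M1 N1 h1'"
    "\<forall>x\<in>M1. h1' (h1 x) - x \<in> N1" "\<forall>y\<in>M2. h1 (h1' y) - y \<in> N2" using 12 unfolding qiso_def by blast
  obtain h2 h2' where b: "qhom s M2 N2 s M3 N3 h2" "qhom s M3 N3 s M2 N2 h2'"
    "\<forall>x\<in>M2. h2' (h2 x) - x \<in> N2" "\<forall>y\<in>M3. h2 (h2' y) - y \<in> N3" using 23 unfolding qiso_def by blast
  show ?thesis unfolding qiso_def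
  proof (rule exI[of _ "h2 \<circ> h1"], rule exI[of _ "h1' \<circ> h2'"], intro conjI ballI)
    show "qhom s M1 N1 s M3 N3 (h2 \<circ> h1)" using a(1) b(1) unfolding qhom_def by (auto simp: image_subset_iff)
    show "qhom s M3 N3 s M1 N1 (h1' \<circ> h2')" using a(2) b(2) unfolding qhom_def by (auto simp: image_subset_iff)
  next
    fix x assume x: "x \<in> M1"
    have h1x: "h1 x \<in> M2" using a(1) x unfolding qhom_def by auto
    have "h1' (h2' (h2 (h1 x)) - h1 x) \<in> N1" using a(2) b(3) h1x unfolding qhom_def by auto
    moreover have "h1' (h2' (h2 (h1 x)) - h1 x) = h1' (h2' (h2 (h1 x))) - h1' (h1 x)"
      using a(2) unfolding qhom_def by (intro additive_diff) auto
    ultimately have "h1' (h2' (h2 (h1 x))) - h1' (h1 x) \<in> N1" by simp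
    moreover have "h1' (h1 x) - x \<in> N1" using a(3) x by auto
    ultimately have "(h1' (h2' (h2 (h1 x))) - h1' (h1 x)) + (h1' (h1 x) - x) \<in> N1"
      by (rule subgrp_add[OF assms(1)])
    then show "(h1' \<circ> h2') ((h2 \<circ> h1) x) - x \<in> N1" by simp
  next
    fix y assume y: "y \<in> M3"
    have h2y: "h2' y \<in> M2" using b(2) y unfolding qhom_def by auto
    have "h2 (h1 (h1' (h2' y)) - h2' y) \<in> N3" using b(1) a(4) h2y unfolding qhom_def by auto
    moreover have "h2 (h1 (h1' (h2' y)) - h2' y) = h2 (h1 (h1' (h2' y))) - h2 (h2' y)"
      using b(1) unfolding qhom_def by (intro additive_diff) auto
    ultimately have "h2 (h1 (h1' (h2' y))) - h2 (h2' y) \<in> N3" by simp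
    moreover have "h2 (h2' y) - y \<in> N3" using b(4) y by auto
    ultimately have "(h2 (h1 (h1' (h2' y))) - h2 (h2' y)) + (h2 (h2' y) - y) \<in> N3"
      by (rule subgrp_add[OF assms(2)])
    then show "(h2 \<circ> h1) ((h1' \<circ> h2') y) - y \<in> N3" by simp
  qed
qed

lemma N_subgrp: "subgrp (coker_N n m f g j)"
  unfolding subgrp_def using N_zero N_diff by blast

theorem theorem5p1:
  fixes f g :: "'a::comm_ring_1 poly" and n m :: nat and d :: 'a
  assumes "1 \<le> m" and "m \<le> n"
    and "degree f \<le> n" and "degree g \<le> m"
    and "\<forall>x. d * x = 0 \<longrightarrow> x = 0" and "d \<noteq> 0"
    and "{x * coeff f n + y * coeff g m | x y. True} = principal_ideal d"
  shows "(\<forall>j<m. \<exists>h1 h2 h3.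
            qhom (*) UNIV (principal_ideal d) smult (coker_M n m (j+1)) (coker_N n m f g (j+1)) h1 \<and>
            qhom smult (coker_M n m (j+1)) (coker_N n m f g (j+1)) smult (coker_M n m j) (coker_N n m f g j) h2 \<and>
            qhom smult (coker_M n m j) (coker_N n m f g j) (*) UNIV (principal_ideal d) h3 \<and>
            qexact UNIV (coker_M n m (j+1)) (coker_N n m f g (j+1)) (coker_N n m f g j) h1 h2 \<and>
            qexact (coker_M n m (j+1)) (coker_M n m j) (coker_N n m f g j) (principal_ideal d) h2 h3 \<and>
            qsurj (coker_M n m j) UNIV (principal_ideal d) h3)
       \<and> (d = 1 \<longrightarrow> (\<forall>j\<le>m. \<forall>k\<le>m.
            qiso smult (coker_M n m j) (coker_N n m f g j) (coker_M n m k) (coker_N n m f g k)))"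
proof -
  note I = assms(7)
  have "1 * coeff f n + 0 * coeff g m \<in> principal_ideal d" using I by blast
  then obtain \<alpha> where an: "coeff f n = \<alpha> * d" unfolding principal_ideal_def by auto
  have "0 * coeff f n + 1 * coeff g m \<in> principal_ideal d" using I by blast
  then obtain \<beta> where bm: "coeff g m = \<beta> * d" unfolding principal_ideal_def by auto
  have "1 * d \<in> principal_ideal d" unfolding principal_ideal_def by blast
  then obtain x0 y0 where dxy: "1 * d = x0 * coeff f n + y0 * coeff g m" using I by blast
  have "d * ((x0 * \<alpha> + y0 * \<beta>) - 1) = 0" using dxy by (simp add: an bm algebra_simps)
  then have xy: "x0 * \<alpha> + y0 * \<beta> = 1" using assms(5) by auto
  note ctx = assms(2,3,4,5) an bm xy
  have P1: "\<forall>j<m. \<exists>h1 h2 h3.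
            qhom (*) UNIV (principal_ideal d) smult (coker_M n m (j+1)) (coker_N n m f g (j+1)) h1 \<and>
            qhom smult (coker_M n m (j+1)) (coker_N n m f g (j+1)) smult (coker_M n m j) (coker_N n m f g j) h2 \<and>
            qhom smult (coker_M n m j) (coker_N n m f g j) (*) UNIV (principal_ideal d) h3 \<and>
            qexact UNIV (coker_M n m (j+1)) (coker_N n m f g (j+1)) (coker_N n m f g j) h1 h2 \<and>
            qexact (coker_M n m (j+1)) (coker_M n m j) (coker_N n m f g j) (principal_ideal d) h2 h3 \<and>
            qsurj (coker_M n m j) UNIV (principal_ideal d) h3"
  proof (intro allI impI)
    fix j assume j: "j < m"
    show "\<exists>h1 h2 h3.
            qhom (*) UNIV (principal_ideal d) smult (coker_M n m (j+1)) (coker_N n m f g (j+1)) h1 \<and>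
            qhom smult (coker_M n m (j+1)) (coker_N n m f g (j+1)) smult (coker_M n m j) (coker_N n m f g j) h2 \<and>
            qhom smult (coker_M n m j) (coker_N n m f g j) (*) UNIV (principal_ideal d) h3 \<and>
            qexact UNIV (coker_M n m (j+1)) (coker_N n m f g (j+1)) (coker_N n m f g j) h1 h2 \<and>
            qexact (coker_M n m (j+1)) (coker_M n m j) (coker_N n m f g j) (principal_ideal d) h2 h3 \<and>
            qsurj (coker_M n m j) UNIV (principal_ideal d) h3"
      using main_j[OF ctx j] by blast
  qed
  have P2: "\<forall>j\<le>m. \<forall>k\<le>m. qiso smult (coker_M n m j) (coker_N n m f g j) (coker_M n m k) (coker_N n m f g k)"
    if d1: "d = 1"
  proof -
    have z: "j \<le> m \<Longrightarrow> qiso smult (coker_M n m j) (coker_N n m f g j) (coker_M n m 0) (coker_N n m f g 0)" for j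
    proof (induction j)
      case 0 show ?case by (rule qiso_refl[OF N_subgrp])
    next
      case (Suc j)
      then have j: "j < m" by simp
      have "qiso smult (coker_M n m (j+1)) (coker_N n m f g (j+1)) (coker_M n m j) (coker_N n m f g j)"
        by (rule iso_j[OF ctx j d1])
      then show ?case using Suc j by (auto intro: qiso_trans[OF N_subgrp N_subgrp])
    qed
    show ?thesis using z by (blast intro: qiso_trans[OF N_subgrp N_subgrp] qiso_sym)
  qed
  show ?thesis using P1 P2 by blast
qed

end
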